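(* Let $H$ be a $d\times d$ Hermitian matrix with eigendecomposition $H=U\,\mathrm{diag}(\mathbf{q})\,U^\dagger$, where $U$ is unitary and $\mathbf{q}\in\mathbb{R}^d$ lists the eigenvalues. Let $t\ge 1/d$. Then $$\max_{\rho\in S^t}\mathrm{Tr}(\rho H)=\max_{\mathbf{p}\in P(t)}\mathbf{p}\cdot\mathbf{q},$$ and if $\mathbf{p}^*$ is a maximizer of the right-hand side, then $\rho^*=U\,\mathrm{diag}(\mathbf{p}^* )\,U^\dagger$ is a maximizer of the left-hand side.
   Context: $S^t=\{\rho\in\mathcal{L}(\mathbb{C}^d):\rho\succeq 0,\ \mathrm{Tr}(\rho)=1,\ \mathrm{Tr}(\rho^2)\le t\}$ is the set of density operators of purity at most $t$. $P(t)=\{\mathbf{p}\in\mathbb{R}^d:\mathbf{p}\ge 0,\ \sum_i\mathbf{p}_i=1,\ \mathbf{p}\cdot\mathbf{p}\le t\}$. $\mathrm{diag}(\mathbf{a})$ is the diagonal matrix with diagonal $\mathbf{a}$. *)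

theory Defs
  imports "Jordan_Normal_Form.Matrix"
begin

definition adj :: "complex mat \<Rightarrow> complex mat" where
  "adj A = mat (dim_col A) (dim_row A) (\<lambda>(i,j). cnj (A $$ (j,i)))"

definition hermitian :: "complex mat \<Rightarrow> bool" where
  "hermitian A \<longleftrightarrow> A \<in> carrier_mat (dim_row A) (dim_row A) \<and> adj A = A"

definition unitary :: "nat \<Rightarrow> complex mat \<Rightarrow> bool" where
  "unitary d U \<longleftrightarrow> U \<in> carrier_mat d d \<and> adj U * U = 1\<^sub>m d \<and> U * adj U = 1\<^sub>m d"

definition psd :: "nat \<Rightarrow> complex mat \<Rightarrow> bool" where
  "psd d A \<longleftrightarrow> A \<in> carrier_mat d d \<and>
     (\<forall>v \<in> carrier_vec d. Im (\<Sum>i<d. cnj (v $ i) * (A *\<^sub>v v) $ i) = 0 \<and>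
                           0 \<le> Re (\<Sum>i<d. cnj (v $ i) * (A *\<^sub>v v) $ i))"

definition diagm :: "real vec \<Rightarrow> complex mat" where
  "diagm a = mat (dim_vec a) (dim_vec a) (\<lambda>(i,j). if i = j then complex_of_real (a $ i) else 0)"

definition trace :: "complex mat \<Rightarrow> complex" where
  "trace A = (\<Sum>i<dim_row A. A $$ (i,i))"

definition St :: "nat \<Rightarrow> real \<Rightarrow> complex mat set" where
  "St d t = {\<rho> \<in> carrier_mat d d. psd d \<rho> \<and> trace \<rho> = 1 \<and> Re (trace (\<rho> * \<rho>)) \<le> t}"

definition Pt :: "nat \<Rightarrow> real \<Rightarrow> real vec set" where
  "Pt d t = {p \<in> carrier_vec d. (\<forall>i<d. 0 \<le> p $ i) \<and> (\<Sum>i<d. p $ i) = 1 \<and> p \<bullet> p \<le> t}"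

end

theory Submission
  imports Defs "HOL-Analysis.Function_Topology"
begin

lemma exists_max_fun:
  fixes q :: "nat \<Rightarrow> real" and t :: real and d :: nat
  assumes ne: "K \<noteq> {}"
  and K_def: "K = {f::nat\<Rightarrow>real. f \<in> PiE UNIV (\<lambda>i. if i<d then {0..1} else {0}) \<and> (\<Sum>i<d. f i) = 1 \<and> (\<Sum>i<d. f i * f i) \<le> t}"
  shows "\<exists>f\<in>K. \<forall>g\<in>K. (\<Sum>i<d. g i * q i) \<le> (\<Sum>i<d. f i * q i)"
proof -
  let ?B = "PiE UNIV (\<lambda>i. if i<d then {0..1::real} else {0})"
  have cB: "compact ?B"
  proof -
    have "compactin (product_topology (\<lambda>i. euclidean) UNIV) ?B"
      by (subst compactin_PiE) (auto simp: compactin_euclidean_iff)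
    then show ?thesis by (simp add: euclidean_product_topology compactin_euclidean_iff)
  qed
  have c1: "continuous_on UNIV (\<lambda>f::nat\<Rightarrow>real. \<Sum>i<d. f i)"
    by (intro continuous_intros continuous_on_product_coordinates)
  have c2: "continuous_on UNIV (\<lambda>f::nat\<Rightarrow>real. \<Sum>i<d. f i * f i)"
    by (intro continuous_intros continuous_on_product_coordinates)
  have c3: "continuous_on UNIV (\<lambda>f::nat\<Rightarrow>real. \<Sum>i<d. f i * q i)"
    by (intro continuous_intros continuous_on_product_coordinates)
  have cl1: "closed {f::nat\<Rightarrow>real. (\<Sum>i<d. f i) = 1}"
    by (rule closed_Collect_eq[OF c1 continuous_on_const])
  have cl2: "closed {f::nat\<Rightarrow>real. (\<Sum>i<d. f i * f i) \<le> t}"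
    by (rule closed_Collect_le[OF c2 continuous_on_const])
  have "K = ?B \<inter> ({f. (\<Sum>i<d. f i) = 1} \<inter> {f. (\<Sum>i<d. f i * f i) \<le> t})"
    unfolding K_def by blast
  then have "compact K" using cB cl1 cl2 by (simp add: closed_Int compact_Int_closed)
  moreover have "continuous_on K (\<lambda>f::nat\<Rightarrow>real. \<Sum>i<d. f i * q i)"
    using c3 continuous_on_subset by blast
  ultimately show ?thesis using continuous_attains_sup[OF _ ne] by blast
qed


lemma adj_carrier: "A \<in> carrier_mat n m \<Longrightarrow> adj A \<in> carrier_mat m n"
  unfolding adj_def by auto

lemma adj_dims[simp]: "dim_row (adj A) = dim_col A" "dim_col (adj A) = dim_row A"
  unfolding adj_def by auto

lemma adj_index[simp]: "i < dim_col A \<Longrightarrow> j < dim_row A \<Longrightarrow> adj A $$ (i,j) = cnj (A $$ (j,i))"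
  unfolding adj_def by auto

lemma adj_adj[simp]: "adj (adj A) = A"
  by (rule eq_matI) auto

lemma trace_mult_sum: "A \<in> carrier_mat n m \<Longrightarrow> B \<in> carrier_mat m n \<Longrightarrow>
   trace (A * B) = (\<Sum>i<n. \<Sum>k<m. A $$ (i,k) * B $$ (k,i))"
  unfolding trace_def
  by (auto intro!: sum.cong simp: atLeast0LessThan scalar_prod_def)

lemma trace_comm: "A \<in> carrier_mat n m \<Longrightarrow> B \<in> carrier_mat m n \<Longrightarrow> trace (A * B) = trace (B * A)"
  apply (simp add: trace_mult_sum[of A n m B] trace_mult_sum[of B m n A])
  apply (subst sum.swap)
  by (simp add: mult.commute)

lemma diagm_carrier[simp]: "p \<in> carrier_vec d \<Longrightarrow> diagm p \<in> carrier_mat d d"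
  unfolding diagm_def by auto

lemma diagm_index: "p \<in> carrier_vec d \<Longrightarrow> i < d \<Longrightarrow> j < d \<Longrightarrow> diagm p $$ (i,j) = (if i = j then complex_of_real (p $ i) else 0)"
  unfolding diagm_def by auto

lemma trace_mult_diagm: "M \<in> carrier_mat d d \<Longrightarrow> q \<in> carrier_vec d \<Longrightarrow>
   trace (M * diagm q) = (\<Sum>i<d. M $$ (i,i) * complex_of_real (q $ i))"
proof -
  assume M: "M \<in> carrier_mat d d" and q: "q \<in> carrier_vec d"
  have "trace (M * diagm q) = (\<Sum>i<d. \<Sum>k<d. M $$ (i,k) * diagm q $$ (k,i))"
    using M q by (simp add: trace_mult_sum)
  also have "\<dots> = (\<Sum>i<d. M $$ (i,i) * complex_of_real (q $ i))"
    using q by (intro sum.cong refl) (simp add: diagm_index if_distrib cong: if_cong)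
  finally show ?thesis .
qed

lemma trace_diagm: "q \<in> carrier_vec d \<Longrightarrow> trace (diagm q) = (\<Sum>i<d. complex_of_real (q $ i))"
  unfolding trace_def diagm_def by auto

lemma quad_adj:
  assumes U: "U \<in> carrier_mat n m" and v: "v \<in> carrier_vec n" and x: "x \<in> carrier_vec m"
  shows "(\<Sum>i<n. cnj (v $ i) * (U *\<^sub>v x) $ i) = (\<Sum>k<m. cnj ((adj U *\<^sub>v v) $ k) * x $ k)"
proof -
  have "(\<Sum>i<n. cnj (v $ i) * (U *\<^sub>v x) $ i) = (\<Sum>i<n. \<Sum>k<m. cnj (v $ i) * U $$ (i,k) * x $ k)"
    using U v x by (auto simp: scalar_prod_def sum_distrib_left atLeast0LessThan mult.assoc intro!: sum.cong)
  also have "\<dots> = (\<Sum>k<m. \<Sum>i<n. cnj (v $ i) * U $$ (i,k) * x $ k)"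
    by (rule sum.swap)
  also have "\<dots> = (\<Sum>k<m. cnj ((adj U *\<^sub>v v) $ k) * x $ k)"
    using U v x by (auto simp: scalar_prod_def sum_distrib_left atLeast0LessThan mult_ac intro!: sum.cong)
  finally show ?thesis .
qed

lemma psd_conj:
  assumes A: "psd d A" and V: "V \<in> carrier_mat d d"
  shows "psd d (adj V * A * V)"
proof -
  have Ac: "A \<in> carrier_mat d d" using A unfolding psd_def by auto
  have "adj V * A * V \<in> carrier_mat d d" using Ac V by (meson adj_carrier mult_carrier_mat)
  moreover have "Im (\<Sum>i<d. cnj (v $ i) * ((adj V * A * V) *\<^sub>v v) $ i) = 0 \<and>
      0 \<le> Re (\<Sum>i<d. cnj (v $ i) * ((adj V * A * V) *\<^sub>v v) $ i)" if v: "v \<in> carrier_vec d" for v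
  proof -
    let ?w = "V *\<^sub>v v"
    have w: "?w \<in> carrier_vec d" using V v by simp
    have aV: "adj V \<in> carrier_mat d d" using V by (rule adj_carrier)
    have "(adj V * A * V) *\<^sub>v v = (adj V * A) *\<^sub>v ?w"
      using assoc_mult_mat_vec[OF mult_carrier_mat[OF aV Ac] V v] .
    also have "\<dots> = adj V *\<^sub>v (A *\<^sub>v ?w)"
      using assoc_mult_mat_vec[OF aV Ac w] .
    finally have "(adj V * A * V) *\<^sub>v v = adj V *\<^sub>v (A *\<^sub>v ?w)" .
    then have "(\<Sum>i<d. cnj (v $ i) * ((adj V * A * V) *\<^sub>v v) $ i)
        = (\<Sum>k<d. cnj (?w $ k) * (A *\<^sub>v ?w) $ k)"
    proof -
      have Aw: "A *\<^sub>v ?w \<in> carrier_vec d" using Ac w by simp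
      have "(\<Sum>i<d. cnj (v $ i) * (adj V *\<^sub>v (A *\<^sub>v ?w)) $ i)
          = (\<Sum>k<d. cnj ((adj (adj V) *\<^sub>v v) $ k) * (A *\<^sub>v ?w) $ k)"
        by (rule quad_adj[OF aV v Aw])
      then show ?thesis unfolding adj_adj \<open>(adj V * A * V) *\<^sub>v v = adj V *\<^sub>v (A *\<^sub>v ?w)\<close> .
    qed
    then show ?thesis using A w unfolding psd_def by simp
  qed
  ultimately show ?thesis unfolding psd_def by blast
qed

lemma cnj_scale: "cnj z * (complex_of_real a * z) = complex_of_real (a * (cmod z)^2)"
proof -
  have "(cmod z)^2 = Re z * Re z + Im z * Im z" using cmod_power2[of z] by (simp add: power2_eq_square)
  then show ?thesis by (simp add: complex_eq_iff algebra_simps)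
qed

lemma psd_diagm:
  assumes p: "p \<in> carrier_vec d" and nn: "\<forall>i<d. 0 \<le> p $ i"
  shows "psd d (diagm p)"
proof -
  have "(\<Sum>i<d. cnj (v $ i) * (diagm p *\<^sub>v v) $ i) = complex_of_real (\<Sum>i<d. p $ i * (cmod (v $ i))^2)"
    if v: "v \<in> carrier_vec d" for v
  proof -
    have "(diagm p *\<^sub>v v) $ i = complex_of_real (p $ i) * v $ i" if i: "i < d" for i
    proof -
      have "(diagm p *\<^sub>v v) $ i = (\<Sum>k<d. (if i = k then complex_of_real (p $ i) else 0) * v $ k)"
      proof -
        have Dr: "dim_row (diagm p) = d" "dim_col (diagm p) = d" using diagm_carrier[OF p] by auto
        have dv: "dim_vec v = d" using v by auto
        have "(diagm p *\<^sub>v v) $ i = (\<Sum>k\<in>{0..<d}. row (diagm p) i $ k * v $ k)"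
          using i Dr dv by (simp add: scalar_prod_def)
        also have "\<dots> = (\<Sum>k<d. (if i = k then complex_of_real (p $ i) else 0) * v $ k)"
          using i Dr p by (auto simp: atLeast0LessThan diagm_index intro!: sum.cong)
        finally show ?thesis .
      qed
      also have "\<dots> = complex_of_real (p $ i) * v $ i"
        using i by (simp add: if_distrib[of "\<lambda>x. x * _"] cong: if_cong)
      finally show ?thesis .
    qed
    note Dv = this
    have "(\<Sum>i<d. cnj (v $ i) * (diagm p *\<^sub>v v) $ i) = (\<Sum>i<d. complex_of_real (p $ i * (cmod (v $ i))^2))"
    proof (intro sum.cong refl)
      fix i assume "i \<in> {..<d}"
      then have i: "i < d" by simp
      show "cnj (v $ i) * (diagm p *\<^sub>v v) $ i = complex_of_real (p $ i * (cmod (v $ i))^2)"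
        by (subst Dv[OF i]) (rule cnj_scale)
    qed
    then show ?thesis by simp
  qed
  then show ?thesis unfolding psd_def using p nn by (auto intro!: sum_nonneg)
qed

lemma sum_two_delta:
  fixes f :: "nat \<Rightarrow> complex"
  assumes "i < d" "j < d" "i \<noteq> j"
  shows "(\<Sum>l<d. f l * ((if l = i then a else 0) + (if l = j then b else 0))) = f i * a + f j * b"
proof -
  have "(\<Sum>l<d. f l * ((if l = i then a else 0) + (if l = j then b else 0)))
      = (\<Sum>l<d. (if l = i then f l * a else 0) + (if l = j then f l * b else 0))"
    using assms(3) by (intro sum.cong) (auto simp: distrib_left)
  also have "\<dots> = f i * a + f j * b" using assms by (simp add: sum.distrib)
  finally show ?thesis .
qed

lemma quad_two:
  fixes a b :: complex
  assumes A: "A \<in> carrier_mat d d" and ij: "i < d" "j < d" "i \<noteq> j"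
  defines "v \<equiv> vec d (\<lambda>l. (if l = i then a else 0) + (if l = j then b else 0))"
  shows "(\<Sum>k<d. cnj (v $ k) * (A *\<^sub>v v) $ k)
     = (A $$ (i,i) * a + A $$ (i,j) * b) * cnj a + (A $$ (j,i) * a + A $$ (j,j) * b) * cnj b"
proof -
  have vk: "\<And>k. k < d \<Longrightarrow> v $ k = (if k = i then a else 0) + (if k = j then b else 0)" unfolding v_def by simp
  have Av: "(A *\<^sub>v v) $ k = A $$ (k,i) * a + A $$ (k,j) * b" if k: "k < d" for k
  proof -
    have "(A *\<^sub>v v) $ k = (\<Sum>l<d. A $$ (k,l) * ((if l = i then a else 0) + (if l = j then b else 0)))"
      using A k by (auto simp: scalar_prod_def atLeast0LessThan v_def intro!: sum.cong)
    also have "\<dots> = A $$ (k,i) * a + A $$ (k,j) * b" by (rule sum_two_delta[OF ij])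
    finally show ?thesis .
  qed
  have "(\<Sum>k<d. cnj (v $ k) * (A *\<^sub>v v) $ k)
     = (\<Sum>k<d. (A $$ (k,i) * a + A $$ (k,j) * b) * ((if k = i then cnj a else 0) + (if k = j then cnj b else 0)))"
    using vk by (intro sum.cong refl) (auto simp: Av mult.commute)
  also have "\<dots> = (A $$ (i,i) * a + A $$ (i,j) * b) * cnj a + (A $$ (j,i) * a + A $$ (j,j) * b) * cnj b"
    by (rule sum_two_delta[OF ij])
  finally show ?thesis .
qed

lemma psd_diag_entry:
  assumes A: "psd d A" and i: "i < d"
  shows "Im (A $$ (i,i)) = 0 \<and> 0 \<le> Re (A $$ (i,i))"
proof -
  have Ac: "A \<in> carrier_mat d d" using A unfolding psd_def by auto
  define v where "v = vec d (\<lambda>l. if l = i then (1::complex) else 0)"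
  have v: "v \<in> carrier_vec d" unfolding v_def by simp
  have vk: "\<And>k. k < d \<Longrightarrow> v $ k = (if k = i then 1 else 0)" unfolding v_def by simp
  have Av: "(A *\<^sub>v v) $ k = A $$ (k,i)" if k: "k < d" for k
  proof -
    have "(A *\<^sub>v v) $ k = (\<Sum>l<d. A $$ (k,l) * (if l = i then 1 else 0))"
      using Ac k by (auto simp: scalar_prod_def atLeast0LessThan v_def intro!: sum.cong)
    also have "\<dots> = A $$ (k,i)" using i by (simp add: if_distrib[of "\<lambda>x. _ * x"] cong: if_cong)
    finally show ?thesis .
  qed
  have "(\<Sum>k<d. cnj (v $ k) * (A *\<^sub>v v) $ k) = (\<Sum>k<d. if k = i then A $$ (k,i) else 0)"
    using vk by (intro sum.cong refl) (auto simp: Av)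
  also have "\<dots> = A $$ (i,i)" using i by simp
  finally show ?thesis using A v unfolding psd_def by metis
qed

lemma psd_herm:
  assumes A: "psd d A" and i: "i < d" and j: "j < d"
  shows "A $$ (j,i) = cnj (A $$ (i,j))"
proof (cases "i = j")
  case True
  then show ?thesis using psd_diag_entry[OF A i] by (simp add: complex_eq_iff)
next
  case False
  have Ac: "A \<in> carrier_mat d d" using A unfolding psd_def by auto
  define v1 where "v1 = vec d (\<lambda>l. (if l = i then (1::complex) else 0) + (if l = j then 1 else 0))"
  define v2 where "v2 = vec d (\<lambda>l. (if l = i then (1::complex) else 0) + (if l = j then \<i> else 0))"
  have "v1 \<in> carrier_vec d" "v2 \<in> carrier_vec d" unfolding v1_def v2_def by auto
  then have I1: "Im (\<Sum>k<d. cnj (v1 $ k) * (A *\<^sub>v v1) $ k) = 0"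
    and I2: "Im (\<Sum>k<d. cnj (v2 $ k) * (A *\<^sub>v v2) $ k) = 0"
    using A unfolding psd_def by auto
  have Q1: "(\<Sum>k<d. cnj (v1 $ k) * (A *\<^sub>v v1) $ k) = (A $$ (i,i) + A $$ (i,j)) + (A $$ (j,i) + A $$ (j,j))"
    using quad_two[OF Ac i j False, of 1 1] unfolding v1_def by simp
  have Q2: "(\<Sum>k<d. cnj (v2 $ k) * (A *\<^sub>v v2) $ k) = (A $$ (i,i) + A $$ (i,j) * \<i>) + (A $$ (j,i) + A $$ (j,j) * \<i>) * (- \<i>)"
    using quad_two[OF Ac i j False, of 1 \<i>] unfolding v2_def by simp
  have "Im (A $$ (i,i)) = 0" "Im (A $$ (j,j)) = 0"
    using psd_diag_entry[OF A i] psd_diag_entry[OF A j] by auto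
  then show ?thesis using I1 I2 Q1 Q2 by (simp add: complex_eq_iff algebra_simps)
qed

lemma cancel1:
  assumes U: "unitary d U" and X: "X \<in> carrier_mat d n"
  shows "adj U * (U * X) = X"
proof -
  have Uc: "U \<in> carrier_mat d d" and UU: "adj U * U = 1\<^sub>m d" using U unfolding unitary_def by auto
  have "adj U * (U * X) = (adj U * U) * X" using Uc X adj_carrier[OF Uc] by simp
  then show ?thesis using UU X by simp
qed

lemma cancel2:
  assumes U: "unitary d U" and X: "X \<in> carrier_mat d n"
  shows "U * (adj U * X) = X"
proof -
  have Uc: "U \<in> carrier_mat d d" and UU: "U * adj U = 1\<^sub>m d" using U unfolding unitary_def by auto
  have "U * (adj U * X) = (U * adj U) * X" using Uc X adj_carrier[OF Uc] by simp
  then show ?thesis using UU X by simp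
qed

lemma trace_conj1:
  assumes U: "unitary d U" and X: "X \<in> carrier_mat d d"
  shows "trace (U * (X * adj U)) = trace X"
proof -
  have Uc: "U \<in> carrier_mat d d" and UU: "adj U * U = 1\<^sub>m d" using U unfolding unitary_def by auto
  have "trace (U * (X * adj U)) = trace ((X * adj U) * U)"
    using Uc X adj_carrier[OF Uc] by (intro trace_comm[of _ d d]) auto
  also have "\<dots> = trace (X * (adj U * U))" using Uc X adj_carrier[OF Uc] by simp
  also have "\<dots> = trace X" using UU X by simp
  finally show ?thesis .
qed

lemma trace_conj2:
  assumes U: "unitary d U" and X: "X \<in> carrier_mat d d"
  shows "trace (adj U * (X * U)) = trace X"
proof -
  have Uc: "U \<in> carrier_mat d d" and UU: "U * adj U = 1\<^sub>m d" using U unfolding unitary_def by auto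
  have "trace (adj U * (X * U)) = trace ((X * U) * adj U)"
    using Uc X adj_carrier[OF Uc] by (intro trace_comm[of _ d d]) auto
  also have "\<dots> = trace (X * (U * adj U))" using Uc X adj_carrier[OF Uc] by simp
  also have "\<dots> = trace X" using UU X by simp
  finally show ?thesis .
qed

lemma forward:
  assumes U: "unitary d U" and q: "q \<in> carrier_vec d" and H: "H = U * diagm q * adj U"
    and p: "p \<in> Pt d t"
  shows "U * diagm p * adj U \<in> St d t \<and> Re (trace ((U * diagm p * adj U) * H)) = p \<bullet> q"
proof -
  have Uc: "U \<in> carrier_mat d d" using U unfolding unitary_def by auto
  have aU: "adj U \<in> carrier_mat d d" using Uc by (rule adj_carrier)
  have pc: "p \<in> carrier_vec d" and pnn: "\<forall>i<d. 0 \<le> p $ i" and ps: "(\<Sum>i<d. p $ i) = 1"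
    and pp: "p \<bullet> p \<le> t" using p unfolding Pt_def by auto
  have Dp: "diagm p \<in> carrier_mat d d" using pc by simp
  have Dq: "diagm q \<in> carrier_mat d d" using q by simp
  have rc: "U * diagm p * adj U \<in> carrier_mat d d" using Uc Dp aU by simp
  have psd: "psd d (U * diagm p * adj U)"
    using psd_conj[OF psd_diagm[OF pc pnn] aU] by simp
  have "trace (U * diagm p * adj U) = trace (diagm p)"
    using trace_conj1[OF U Dp] Uc Dp aU by simp
  also have "\<dots> = complex_of_real (\<Sum>i<d. p $ i)" using pc by (simp add: trace_diagm)
  finally have tr: "trace (U * diagm p * adj U) = 1" using ps by simp
  have "(U * diagm p * adj U) * (U * diagm p * adj U) = U * ((diagm p * diagm p) * adj U)"
  proof -
    have X: "diagm p * adj U \<in> carrier_mat d d" using Dp aU by simp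
    have UX: "U * (diagm p * adj U) \<in> carrier_mat d d" using Uc X by simp
    have "(U * diagm p * adj U) * (U * diagm p * adj U) = (U * (diagm p * adj U)) * (U * (diagm p * adj U))"
      using Uc Dp aU by simp
    also have "\<dots> = U * ((diagm p * adj U) * (U * (diagm p * adj U)))"
      using assoc_mult_mat[OF Uc X UX] .
    also have "(diagm p * adj U) * (U * (diagm p * adj U)) = diagm p * (adj U * (U * (diagm p * adj U)))"
      using assoc_mult_mat[OF Dp aU UX] .
    also have "\<dots> = diagm p * (diagm p * adj U)" using cancel1[OF U X] by simp
    also have "\<dots> = (diagm p * diagm p) * adj U" using Dp aU by simp
    finally show ?thesis .
  qed
  then have "trace ((U * diagm p * adj U) * (U * diagm p * adj U)) = trace (diagm p * diagm p)"
    using trace_conj1[OF U, of "diagm p * diagm p"] Dp by simp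
  also have "\<dots> = (\<Sum>i<d. diagm p $$ (i,i) * complex_of_real (p $ i))"
    using trace_mult_diagm[OF Dp pc] .
  also have "\<dots> = complex_of_real (\<Sum>i<d. p $ i * p $ i)"
    using pc by (simp add: diagm_index)
  finally have "Re (trace ((U * diagm p * adj U) * (U * diagm p * adj U))) = p \<bullet> p"
    using pc by (simp add: scalar_prod_def atLeast0LessThan)
  then have inS: "U * diagm p * adj U \<in> St d t"
    unfolding St_def using rc psd tr pp by simp
  have "(U * diagm p * adj U) * H = U * ((diagm p * diagm q) * adj U)"
  proof -
    have X: "diagm p * adj U \<in> carrier_mat d d" using Dp aU by simp
    have Y: "diagm q * adj U \<in> carrier_mat d d" using Dq aU by simp
    have UY: "U * (diagm q * adj U) \<in> carrier_mat d d" using Uc Y by simp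
    have "(U * diagm p * adj U) * H = (U * (diagm p * adj U)) * (U * (diagm q * adj U))"
      unfolding H using Uc Dp Dq aU by simp
    also have "\<dots> = U * ((diagm p * adj U) * (U * (diagm q * adj U)))"
      using assoc_mult_mat[OF Uc X UY] .
    also have "(diagm p * adj U) * (U * (diagm q * adj U)) = diagm p * (adj U * (U * (diagm q * adj U)))"
      using assoc_mult_mat[OF Dp aU UY] .
    also have "\<dots> = diagm p * (diagm q * adj U)" using cancel1[OF U Y] by simp
    also have "\<dots> = (diagm p * diagm q) * adj U" using Dp Dq aU by simp
    finally show ?thesis .
  qed
  then have "trace ((U * diagm p * adj U) * H) = trace (diagm p * diagm q)"
    using trace_conj1[OF U, of "diagm p * diagm q"] Dp Dq by simp
  also have "\<dots> = (\<Sum>i<d. diagm p $$ (i,i) * complex_of_real (q $ i))"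
    using trace_mult_diagm[OF Dp q] .
  also have "\<dots> = complex_of_real (\<Sum>i<d. p $ i * q $ i)"
    using pc by (simp add: diagm_index)
  finally have "Re (trace ((U * diagm p * adj U) * H)) = p \<bullet> q"
    using q by (simp add: scalar_prod_def atLeast0LessThan)
  then show ?thesis using inS by simp
qed

lemma Re_mult_cnj: "Re (z * cnj z) = (cmod z)^2"
  using cmod_power2[of z] by (simp add: power2_eq_square)

lemma backward:
  assumes U: "unitary d U" and q: "q \<in> carrier_vec d" and H: "H = U * diagm q * adj U"
    and r: "\<rho> \<in> St d t"
  shows "\<exists>p\<in>Pt d t. Re (trace (\<rho> * H)) = p \<bullet> q"
proof -
  have Uc: "U \<in> carrier_mat d d" using U unfolding unitary_def by auto
  have aU: "adj U \<in> carrier_mat d d" using Uc by (rule adj_carrier)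
  have rc: "\<rho> \<in> carrier_mat d d" and rpsd: "psd d \<rho>" and rtr: "trace \<rho> = 1"
    and rpur: "Re (trace (\<rho> * \<rho>)) \<le> t" using r unfolding St_def by auto
  have Dq: "diagm q \<in> carrier_mat d d" using q by simp
  define \<sigma> where "\<sigma> = adj U * \<rho> * U"
  have sc: "\<sigma> \<in> carrier_mat d d" unfolding \<sigma>_def using aU rc Uc by simp
  have spsd: "psd d \<sigma>" unfolding \<sigma>_def using psd_conj[OF rpsd Uc] .
  define p where "p = vec d (\<lambda>i. Re (\<sigma> $$ (i,i)))"
  have pc: "p \<in> carrier_vec d" unfolding p_def by simp
  have pi: "\<And>i. i < d \<Longrightarrow> p $ i = Re (\<sigma> $$ (i,i))" unfolding p_def by simp
  have pnn: "\<forall>i<d. 0 \<le> p $ i" using pi psd_diag_entry[OF spsd] by simp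
  have "trace \<sigma> = trace \<rho>"
    unfolding \<sigma>_def using trace_conj2[OF U rc] aU rc Uc by simp
  then have "(\<Sum>i<d. \<sigma> $$ (i,i)) = 1" using rtr sc unfolding trace_def by simp
  then have "Re (\<Sum>i<d. \<sigma> $$ (i,i)) = 1" by simp
  then have psum: "(\<Sum>i<d. p $ i) = 1" using pi by (simp add: Re_sum)
  have "\<sigma> * \<sigma> = adj U * ((\<rho> * \<rho>) * U)"
  proof -
    have X: "\<rho> * U \<in> carrier_mat d d" using rc Uc by simp
    have aX: "adj U * (\<rho> * U) \<in> carrier_mat d d" using aU X by simp
    have "\<sigma> * \<sigma> = (adj U * (\<rho> * U)) * (adj U * (\<rho> * U))"
      unfolding \<sigma>_def using aU rc Uc by simp
    also have "\<dots> = adj U * ((\<rho> * U) * (adj U * (\<rho> * U)))"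
      using assoc_mult_mat[OF aU X aX] .
    also have "(\<rho> * U) * (adj U * (\<rho> * U)) = \<rho> * (U * (adj U * (\<rho> * U)))"
      using assoc_mult_mat[OF rc Uc aX] .
    also have "\<dots> = \<rho> * (\<rho> * U)" using cancel2[OF U X] by simp
    also have "\<dots> = (\<rho> * \<rho>) * U" using rc Uc by simp
    finally show ?thesis .
  qed
  then have "trace (\<sigma> * \<sigma>) = trace (\<rho> * \<rho>)"
    using trace_conj2[OF U, of "\<rho> * \<rho>"] rc by simp
  moreover have "trace (\<sigma> * \<sigma>) = (\<Sum>i<d. \<Sum>k<d. \<sigma> $$ (i,k) * \<sigma> $$ (k,i))"
    using trace_mult_sum[OF sc sc] .
  ultimately have "Re (\<Sum>i<d. \<Sum>k<d. \<sigma> $$ (i,k) * \<sigma> $$ (k,i)) \<le> t" using rpur by simp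
  moreover have "Re (\<Sum>i<d. \<Sum>k<d. \<sigma> $$ (i,k) * \<sigma> $$ (k,i)) = (\<Sum>i<d. \<Sum>k<d. (cmod (\<sigma> $$ (i,k)))^2)"
  proof -
    have "Re (\<Sum>i<d. \<Sum>k<d. \<sigma> $$ (i,k) * \<sigma> $$ (k,i)) = (\<Sum>i<d. \<Sum>k<d. Re (\<sigma> $$ (i,k) * \<sigma> $$ (k,i)))"
      by (simp add: Re_sum)
    also have "\<dots> = (\<Sum>i<d. \<Sum>k<d. (cmod (\<sigma> $$ (i,k)))^2)"
    proof (intro sum.cong refl)
      fix i k assume "i \<in> {..<d}" "k \<in> {..<d}"
      then have i: "i < d" and k: "k < d" by auto
      show "Re (\<sigma> $$ (i,k) * \<sigma> $$ (k,i)) = (cmod (\<sigma> $$ (i,k)))^2"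
        by (subst psd_herm[OF spsd i k]) (rule Re_mult_cnj)
    qed
    finally show ?thesis .
  qed
  moreover have "p \<bullet> p \<le> (\<Sum>i<d. \<Sum>k<d. (cmod (\<sigma> $$ (i,k)))^2)"
  proof -
    have "p \<bullet> p = (\<Sum>i<d. (Re (\<sigma> $$ (i,i)))^2)"
      using pc pi by (simp add: scalar_prod_def atLeast0LessThan power2_eq_square)
    also have "\<dots> \<le> (\<Sum>i<d. (cmod (\<sigma> $$ (i,i)))^2)"
      by (intro sum_mono) (metis abs_Re_le_cmod abs_ge_zero power2_abs power_mono)
    also have "\<dots> \<le> (\<Sum>i<d. \<Sum>k<d. (cmod (\<sigma> $$ (i,k)))^2)"
      by (intro sum_mono) (rule member_le_sum[where f = "\<lambda>k. (cmod (\<sigma> $$ (_,k)))^2"], auto)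
    finally show ?thesis .
  qed
  ultimately have ppt: "p \<bullet> p \<le> t" by linarith
  have pP: "p \<in> Pt d t" unfolding Pt_def using pc pnn psum ppt by simp
  have c1: "\<rho> * U \<in> carrier_mat d d" "U * diagm q \<in> carrier_mat d d"
    "\<rho> * (U * diagm q) \<in> carrier_mat d d" "diagm q * adj U \<in> carrier_mat d d"
    "U * (diagm q * adj U) \<in> carrier_mat d d" "\<rho> * U * diagm q \<in> carrier_mat d d"
    using rc Uc Dq aU by auto
  have "\<rho> * H = \<rho> * ((U * diagm q) * adj U)" unfolding H by simp
  also have "\<dots> = (\<rho> * (U * diagm q)) * adj U" using assoc_mult_mat[OF rc c1(2) aU] by simp
  also have "\<rho> * (U * diagm q) = \<rho> * U * diagm q" using assoc_mult_mat[OF rc Uc Dq] by simp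
  finally have "\<rho> * H = (\<rho> * U * diagm q) * adj U" .
  then have "trace (\<rho> * H) = trace (adj U * (\<rho> * U * diagm q))"
    using trace_comm[of "\<rho> * U * diagm q" d d "adj U"] rc Uc Dq aU c1 by simp
  also have "\<dots> = trace (\<sigma> * diagm q)"
  proof -
    have "adj U * (\<rho> * U * diagm q) = (adj U * (\<rho> * U)) * diagm q"
      using assoc_mult_mat[OF aU c1(1) Dq] by simp
    also have "adj U * (\<rho> * U) = \<sigma>" unfolding \<sigma>_def using assoc_mult_mat[OF aU rc Uc] by simp
    finally show ?thesis by simp
  qed
  also have "\<dots> = (\<Sum>i<d. \<sigma> $$ (i,i) * complex_of_real (q $ i))"
    using trace_mult_diagm[OF sc q] .
  finally have "Re (trace (\<rho> * H)) = (\<Sum>i<d. p $ i * q $ i)"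
    using pi by (simp add: Re_sum)
  also have "\<dots> = p \<bullet> q" using q by (simp add: scalar_prod_def atLeast0LessThan)
  finally show ?thesis using pP by blast
qed


lemma Pt_max:
  assumes d: "0 < d" and t: "1 / real d \<le> t" and q: "q \<in> carrier_vec d"
  shows "\<exists>p\<in>Pt d t. \<forall>p'\<in>Pt d t. p' \<bullet> q \<le> p \<bullet> q"
proof -
  define K where "K = {f::nat\<Rightarrow>real. f \<in> PiE UNIV (\<lambda>i. if i<d then {0..1} else {0}) \<and> (\<Sum>i<d. f i) = 1 \<and> (\<Sum>i<d. f i * f i) \<le> t}"
  define u where "u = (\<lambda>i::nat. if i < d then 1 / real d else 0)"
  have u1: "1 / real d \<le> 1" using d by simp
  have u0: "0 \<le> 1 / real d" by simp
  have uP: "u \<in> PiE UNIV (\<lambda>i. if i<d then {0..1} else {0})"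
    unfolding PiE_iff u_def using u0 u1 by simp
  have us: "(\<Sum>i<d. u i) = 1"
  proof -
    have "(\<Sum>i<d. u i) = (\<Sum>i<d. 1 / real d)" by (intro sum.cong) (auto simp: u_def)
    also have "\<dots> = 1" using d by simp
    finally show ?thesis .
  qed
  have uss: "(\<Sum>i<d. u i * u i) \<le> t"
  proof -
    have "(\<Sum>i<d. u i * u i) = (\<Sum>i<d. 1 / real d * (1 / real d))" by (intro sum.cong) (auto simp: u_def)
    also have "\<dots> = real d * (1 / real d * (1 / real d))" by simp
    also have "\<dots> = 1 / real d" using d by simp
    finally show ?thesis using t by simp
  qed
  have "u \<in> K" unfolding K_def using uP us uss by blast
  then have ne: "K \<noteq> {}" by auto
  obtain f where fK: "f \<in> K" and fmax: "\<forall>g\<in>K. (\<Sum>i<d. g i * q $ i) \<le> (\<Sum>i<d. f i * q $ i)"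
    using exists_max_fun[OF ne K_def, of "\<lambda>i. q $ i"] by blast
  define p where "p = vec d f"
  have vsum: "\<And>v w. w \<in> carrier_vec d \<Longrightarrow> v \<bullet> w = (\<Sum>i<d. v $ i * w $ i)"
    by (auto simp: scalar_prod_def atLeast0LessThan)
  have pc0: "p \<in> carrier_vec d" unfolding p_def by simp
  have pi: "\<And>i. i < d \<Longrightarrow> p $ i = f i" unfolding p_def by simp
  have f1: "f \<in> PiE UNIV (\<lambda>i. if i<d then {0..1} else {0})" and f2: "(\<Sum>i<d. f i) = 1"
      and f3: "(\<Sum>i<d. f i * f i) \<le> t" using fK unfolding K_def by auto
  have pq: "p \<bullet> q = (\<Sum>i<d. f i * q $ i)"
    using vsum[OF q, of p] pi by (auto intro!: sum.cong)
  have pP: "p \<in> Pt d t"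
  proof -
    have "\<forall>i<d. 0 \<le> p $ i"
    proof (intro allI impI)
      fix i assume i: "i < d"
      have "f i \<in> (if i < d then {0..1} else {0})" using f1 unfolding PiE_iff by blast
      then have "f i \<in> {0..1}" using i by simp
      then show "0 \<le> p $ i" using i pi by simp
    qed
    moreover have "(\<Sum>i<d. p $ i) = 1" using f2 pi by (auto intro!: sum.cong[THEN trans])
    moreover have "p \<bullet> p = (\<Sum>i<d. f i * f i)"
      using vsum[OF pc0, of p] pi by (auto intro!: sum.cong)
    ultimately show ?thesis unfolding Pt_def using pc0 f3 by simp
  qed
  have "p' \<bullet> q \<le> p \<bullet> q" if p': "p' \<in> Pt d t" for p'
  proof -
    have pc: "p' \<in> carrier_vec d" and pnn: "\<forall>i<d. 0 \<le> p' $ i" and ps: "(\<Sum>i<d. p' $ i) = 1"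
      and pp: "p' \<bullet> p' \<le> t" using p' unfolding Pt_def by auto
    define g where "g = (\<lambda>i. if i < d then p' $ i else 0)"
    have gi: "\<And>i. i < d \<Longrightarrow> g i = p' $ i" unfolding g_def by simp
    have le1: "p' $ i \<le> 1" if i: "i < d" for i
    proof -
      have "p' $ i \<le> (\<Sum>j<d. p' $ j)" using i pnn by (intro member_le_sum) auto
      then show ?thesis using ps by simp
    qed
    have "g \<in> K"
    proof -
      have "g \<in> PiE UNIV (\<lambda>i. if i<d then {0..1} else {0})"
        unfolding PiE_iff g_def using pnn le1 by simp
      moreover have "(\<Sum>i<d. g i) = 1" using ps gi by simp
      moreover have "(\<Sum>i<d. g i * g i) \<le> t"
      proof -
        have "(\<Sum>i<d. g i * g i) = p' \<bullet> p'" using vsum[OF pc, of p'] gi by simp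
        then show ?thesis using pp by simp
      qed
      ultimately show ?thesis unfolding K_def by blast
    qed
    then have "(\<Sum>i<d. g i * q $ i) \<le> (\<Sum>i<d. f i * q $ i)" using fmax by blast
    moreover have "(\<Sum>i<d. g i * q $ i) = p' \<bullet> q" using vsum[OF q, of p'] gi by simp
    ultimately show ?thesis using pq by simp
  qed
  then show ?thesis using pP by blast
qed

theorem mainTheorem3:
  fixes d :: nat and H U :: "complex mat" and q :: "real vec" and t :: real
  assumes "0 < d"
    and "H \<in> carrier_mat d d" and "hermitian H"
    and "unitary d U"
    and "q \<in> carrier_vec d"
    and "H = U * diagm q * adj U"
    and "1 / real d \<le> t"
  shows "(\<exists>\<rho>\<in>St d t. \<forall>\<sigma>\<in>St d t. Re (trace (\<sigma> * H)) \<le> Re (trace (\<rho> * H)))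
       \<and> (\<exists>p\<in>Pt d t. \<forall>p'\<in>Pt d t. p' \<bullet> q \<le> p \<bullet> q)
       \<and> (SUP \<rho>\<in>St d t. Re (trace (\<rho> * H))) = (SUP p\<in>Pt d t. p \<bullet> q)
       \<and> (\<forall>ps\<in>Pt d t. (\<forall>p\<in>Pt d t. p \<bullet> q \<le> ps \<bullet> q) \<longrightarrow>
            U * diagm ps * adj U \<in> St d t \<and>
            (\<forall>\<rho>\<in>St d t. Re (trace (\<rho> * H)) \<le> Re (trace ((U * diagm ps * adj U) * H))))"
proof -
  note U = assms(4) and q = assms(5) and H = assms(6)
  have img: "(\<lambda>\<rho>. Re (trace (\<rho> * H))) ` St d t = (\<lambda>p. p \<bullet> q) ` Pt d t"
  proof
    show "(\<lambda>\<rho>. Re (trace (\<rho> * H))) ` St d t \<subseteq> (\<lambda>p. p \<bullet> q) ` Pt d t"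
      using backward[OF U q H] by fastforce
    show "(\<lambda>p. p \<bullet> q) ` Pt d t \<subseteq> (\<lambda>\<rho>. Re (trace (\<rho> * H))) ` St d t"
    proof
      fix x assume "x \<in> (\<lambda>p. p \<bullet> q) ` Pt d t"
      then obtain p where p: "p \<in> Pt d t" and x: "x = p \<bullet> q" by auto
      from forward[OF U q H p] show "x \<in> (\<lambda>\<rho>. Re (trace (\<rho> * H))) ` St d t"
        unfolding x by (metis image_eqI)
    qed
  qed
  have last: "U * diagm ps * adj U \<in> St d t \<and>
            (\<forall>\<rho>\<in>St d t. Re (trace (\<rho> * H)) \<le> Re (trace ((U * diagm ps * adj U) * H)))"
    if ps: "ps \<in> Pt d t" and mx: "\<forall>p\<in>Pt d t. p \<bullet> q \<le> ps \<bullet> q" for ps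
  proof -
    have f: "U * diagm ps * adj U \<in> St d t \<and> Re (trace ((U * diagm ps * adj U) * H)) = ps \<bullet> q"
      using forward[OF U q H ps] .
    have "Re (trace (\<rho> * H)) \<le> ps \<bullet> q" if r: "\<rho> \<in> St d t" for \<rho>
      using backward[OF U q H r] mx by auto
    then show ?thesis using f by simp
  qed
  obtain p0 where p0: "p0 \<in> Pt d t" and p0m: "\<forall>p'\<in>Pt d t. p' \<bullet> q \<le> p0 \<bullet> q"
    using Pt_max[OF assms(1) assms(7) q] by blast
  have e1: "\<exists>\<rho>\<in>St d t. \<forall>\<sigma>\<in>St d t. Re (trace (\<sigma> * H)) \<le> Re (trace (\<rho> * H))"
    using last[OF p0 p0m] by blast
  have e3: "(SUP \<rho>\<in>St d t. Re (trace (\<rho> * H))) = (SUP p\<in>Pt d t. p \<bullet> q)"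
    using img by simp
  have e2: "\<exists>p\<in>Pt d t. \<forall>p'\<in>Pt d t. p' \<bullet> q \<le> p \<bullet> q" using p0 p0m by blast
  have e4: "\<forall>ps\<in>Pt d t. (\<forall>p\<in>Pt d t. p \<bullet> q \<le> ps \<bullet> q) \<longrightarrow>
            U * diagm ps * adj U \<in> St d t \<and>
            (\<forall>\<rho>\<in>St d t. Re (trace (\<rho> * H)) \<le> Re (trace ((U * diagm ps * adj U) * H)))"
  proof (intro ballI impI)
    fix ps assume a: "ps \<in> Pt d t" and b: "\<forall>p\<in>Pt d t. p \<bullet> q \<le> ps \<bullet> q"
    show "U * diagm ps * adj U \<in> St d t \<and>
            (\<forall>\<rho>\<in>St d t. Re (trace (\<rho> * H)) \<le> Re (trace ((U * diagm ps * adj U) * H)))"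
      by (rule last[OF a b])
  qed
  show ?thesis using e1 e2 e3 e4 by (simp only: conj_assoc)
qed

end
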